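(* Let $\Lambda$ be a $d$-partition of $\{1,\dots,N\}$ and let $r^{(n)}_N(x,z)=\mathbb P^\circ(X_N(n)=z\mid X_N(0)=x)$ denote the $n$-step transition probabilities of the associated lumped chain. (i) For all $0<n\le N$, all $x\in\mathcal S_d$ and all $z\in\Gamma_{N,d}$ with $\mathrm{dist}(x,z)=n$, $$r^{(n)}_N(x,z)=\frac{n!}{N^n}\frac{\mathbb Q_N(z)}{\mathbb Q_N(x)}.$$ (ii) Let $n\ge0$, let $m\ge1$ be such that $p=(n+2-m)/2$ is a nonnegative integer. Then for all $x\in\mathcal S_d$ and all $z\in\Gamma_{N,d}$ with $\mathrm{dist}(x,z)=m$, $$r^{(n+2)}_N(x,z)\le r^{(m)}_N(x,z)\frac1{N^p}\frac{(m+2p)!}{m!\,p!}.$$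
   Context: Let $(\sigma_N(t))$ be the discrete-time simple random walk on $\{-1,1\}^N$ (jump to each Hamming neighbour with probability $1/N$). For a partition $\Lambda$ of $\{1,\dots,N\}$ into nonempty classes $\Lambda_1,\dots,\Lambda_d$, let $\gamma_k(\sigma)=|\Lambda_k|^{-1}\sum_{i\in\Lambda_k}\sigma_i$, $\gamma=(\gamma_1,\dots,\gamma_d)$, $\Gamma_{N,d}=\gamma(\{-1,1\}^N)$, $\mathcal S_d=\{-1,1\}^d$. The lumped chain $X_N(t)=\gamma(\sigma_N(t))$ is a Markov chain on $\Gamma_{N,d}$ with transition probabilities $r_N(x,x+s\frac2{|\Lambda_k|}u_k)=\frac{|\Lambda_k|}N\frac{1-sx_k}2$ ($s=\pm1$, $u_k$ canonical basis) and reversible measure $\mathbb Q_N(x)=2^{-N}\prod_k\binom{|\Lambda_k|}{|\Lambda_k|(1+x_k)/2}$. $\mathrm{dist}(x,y)=\sum_k\frac{|\Lambda_k|}2|x_k-y_k|$. *)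

theory Defs
  imports Complex_Main
begin

definition is_partition :: "nat \<Rightarrow> nat \<Rightarrow> (nat \<Rightarrow> nat set) \<Rightarrow> bool" where
  "is_partition N d Lam \<longleftrightarrow>
     (\<forall>k<d. Lam k \<noteq> {} \<and> Lam k \<subseteq> {1..N}) \<and>
     (\<forall>k<d. \<forall>l<d. k \<noteq> l \<longrightarrow> Lam k \<inter> Lam l = {}) \<and>
     (\<Union>k<d. Lam k) = {1..N}"

definition spins :: "nat \<Rightarrow> (nat \<Rightarrow> real) set" where
  "spins N = {\<sigma>. \<forall>i. (i \<in> {1..N} \<longrightarrow> \<sigma> i \<in> {-1, 1}) \<and> (i \<notin> {1..N} \<longrightarrow> \<sigma> i = 0)}"

text \<open>Block magnetisation gamma; vectors in R^d are functions vanishing at indices \<ge> d.\<close>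
definition gamma :: "nat \<Rightarrow> (nat \<Rightarrow> nat set) \<Rightarrow> (nat \<Rightarrow> real) \<Rightarrow> (nat \<Rightarrow> real)" where
  "gamma d Lam \<sigma> = (\<lambda>k. if k < d then (\<Sum>i\<in>Lam k. \<sigma> i) / real (card (Lam k)) else 0)"

definition Gamma :: "nat \<Rightarrow> nat \<Rightarrow> (nat \<Rightarrow> nat set) \<Rightarrow> (nat \<Rightarrow> real) set" where
  "Gamma N d Lam = gamma d Lam ` spins N"

definition Sd :: "nat \<Rightarrow> (nat \<Rightarrow> real) set" where
  "Sd d = {x. \<forall>k. (k < d \<longrightarrow> x k \<in> {-1, 1}) \<and> (d \<le> k \<longrightarrow> x k = 0)}"

definition rN :: "nat \<Rightarrow> nat \<Rightarrow> (nat \<Rightarrow> nat set) \<Rightarrow> (nat \<Rightarrow> real) \<Rightarrow> (nat \<Rightarrow> real) \<Rightarrow> real" where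
  "rN N d Lam x y = (\<Sum>k<d. \<Sum>s\<in>{-1, 1::real}.
      if y = x(k := x k + s * 2 / real (card (Lam k)))
      then real (card (Lam k)) / real N * (1 - s * x k) / 2 else 0)"

fun rn :: "nat \<Rightarrow> nat \<Rightarrow> (nat \<Rightarrow> nat set) \<Rightarrow> nat \<Rightarrow> (nat \<Rightarrow> real) \<Rightarrow> (nat \<Rightarrow> real) \<Rightarrow> real" where
  "rn N d Lam 0 x z = (if x = z then 1 else 0)"
| "rn N d Lam (Suc n) x z = (\<Sum>y\<in>Gamma N d Lam. rN N d Lam x y * rn N d Lam n y z)"

text \<open>Reversible measure Q_N(x) = 2^-N prod_k binom(|Lam_k|, |Lam_k|(1+x_k)/2)
  (the lower index is an integer on Gamma).\<close>
definition QN :: "nat \<Rightarrow> nat \<Rightarrow> (nat \<Rightarrow> nat set) \<Rightarrow> (nat \<Rightarrow> real) \<Rightarrow> real" where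
  "QN N d Lam x = (1 / 2 ^ N) *
     (\<Prod>k<d. real (card (Lam k) choose nat (round (real (card (Lam k)) * (1 + x k) / 2))))"

definition distL :: "nat \<Rightarrow> (nat \<Rightarrow> nat set) \<Rightarrow> (nat \<Rightarrow> real) \<Rightarrow> (nat \<Rightarrow> real) \<Rightarrow> real" where
  "distL d Lam x y = (\<Sum>k<d. real (card (Lam k)) / 2 * \<bar>x k - y k\<bar>)"

end

theory Submission
  imports Defs "HOL-Library.FuncSet"
begin

lemma binom_step: "(c choose a) * (c - a) = (c choose (a+1)) * (a+1)"
proof -
  have "(c - a) * (c choose a) = c * ((c - 1) choose a)" by (rule binomial_absorb_comp)
  moreover have "(a+1) * (c choose (a+1)) = c * ((c - 1) choose ((a+1) - 1))"
    by (rule times_binomial_minus1_eq) simp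
  ultimately show ?thesis by (simp add: mult.commute)
qed

locale LP =
  fixes N d :: nat and Lam :: "nat \<Rightarrow> nat set"
  assumes part: "is_partition N d Lam" and dpos: "0 < d"
begin

abbreviation "G \<equiv> Gamma N d Lam"

lemma Lam_ne: "k < d \<Longrightarrow> Lam k \<noteq> {}" using part unfolding is_partition_def by auto
lemma Lam_sub: "k < d \<Longrightarrow> Lam k \<subseteq> {1..N}" using part unfolding is_partition_def by auto
lemma Lam_disj: "k < d \<Longrightarrow> l < d \<Longrightarrow> k \<noteq> l \<Longrightarrow> Lam k \<inter> Lam l = {}"
  using part unfolding is_partition_def by auto
lemma Lam_Un: "(\<Union>k<d. Lam k) = {1..N}" using part unfolding is_partition_def by auto
lemma Lam_fin: "k < d \<Longrightarrow> finite (Lam k)" using Lam_sub finite_subset by blast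
lemma card_pos: "k < d \<Longrightarrow> 0 < card (Lam k)" using Lam_ne Lam_fin card_gt_0_iff by blast

lemma sum_card: "(\<Sum>k<d. card (Lam k)) = N"
proof -
  have "card (\<Union>k<d. Lam k) = (\<Sum>k<d. card (Lam k))"
    by (rule card_UN_disjoint) (auto simp: Lam_fin Lam_disj)
  then show ?thesis using Lam_Un by simp
qed

lemma Npos: "0 < N"
proof -
  have "card (Lam 0) \<le> N" using sum_card dpos
    by (metis lessThan_iff finite_lessThan member_le_sum zero_le)
  then show ?thesis using card_pos[OF dpos] by linarith
qed

lemma spins_fin: "finite (spins N)"
proof -
  have "spins N \<subseteq> (\<lambda>f i. if i \<in> {1..N} then f i else 0) ` (PiE {1..N} (\<lambda>_. {-1, 1::real}))"
  proof
    fix \<sigma> assume s: "\<sigma> \<in> spins N"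
    have "\<sigma> = (\<lambda>i. if i \<in> {1..N} then restrict \<sigma> {1..N} i else 0)"
      using s unfolding spins_def by (force simp: fun_eq_iff)
    moreover have "restrict \<sigma> {1..N} \<in> PiE {1..N} (\<lambda>_. {-1, 1::real})"
      using s unfolding spins_def by auto
    ultimately show "\<sigma> \<in> (\<lambda>f i. if i \<in> {1..N} then f i else 0) ` (PiE {1..N} (\<lambda>_. {-1, 1::real}))"
      by blast
  qed
  moreover have "finite (PiE {1..N} (\<lambda>_. {-1, 1::real}))" by (intro finite_PiE) auto
  ultimately show ?thesis using finite_subset by blast
qed

lemma G_fin: "finite G" unfolding Gamma_def using spins_fin by simp

lemma G_high: "z \<in> G \<Longrightarrow> d \<le> k \<Longrightarrow> z k = 0"
  unfolding Gamma_def gamma_def by auto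

lemma G_int: assumes "z \<in> G" "k < d"
  shows "\<exists>a::nat. a \<le> card (Lam k) \<and> real (card (Lam k)) * (1 + z k) / 2 = real a"
proof -
  obtain \<sigma> where s: "\<sigma> \<in> spins N" and z: "z = gamma d Lam \<sigma>" using assms unfolding Gamma_def by auto
  let ?A = "{i \<in> Lam k. \<sigma> i = 1}"
  have val: "\<And>i. i \<in> Lam k \<Longrightarrow> \<sigma> i = 2 * (if i \<in> ?A then 1 else 0) - 1"
    using s Lam_sub[OF assms(2)] unfolding spins_def by force
  have "(\<Sum>i\<in>Lam k. \<sigma> i) = (\<Sum>i\<in>Lam k. 2 * (if i \<in> ?A then 1 else 0) - 1)"
    using val by (rule sum.cong[OF refl])
  also have "\<dots> = 2 * real (card ?A) - real (card (Lam k))"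
    using Lam_fin[OF assms(2)] by (simp add: sum_subtractf sum_distrib_left[symmetric] sum.If_cases Int_absorb1 Int_def)
  finally have S: "(\<Sum>i\<in>Lam k. \<sigma> i) = 2 * real (card ?A) - real (card (Lam k))" .
  have zk: "z k = (\<Sum>i\<in>Lam k. \<sigma> i) / real (card (Lam k))" using z assms(2) unfolding gamma_def by simp
  have cp: "real (card (Lam k)) > 0" using card_pos[OF assms(2)] by simp
  have "real (card (Lam k)) * (1 + z k) / 2 = real (card ?A)"
    using cp unfolding zk S by (simp add: field_simps)
  moreover have "card ?A \<le> card (Lam k)" using Lam_fin[OF assms(2)] by (intro card_mono) auto
  ultimately show ?thesis by blast
qed

lemma G_abs: assumes "z \<in> G" "k < d" shows "\<bar>z k\<bar> \<le> 1"
proof -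
  obtain a::nat where a: "a \<le> card (Lam k)" "real (card (Lam k)) * (1 + z k) / 2 = real a"
    using G_int[OF assms] by blast
  have cp: "real (card (Lam k)) > 0" using card_pos[OF assms(2)] by simp
  have e: "z k * real (card (Lam k)) = 2 * real a - real (card (Lam k))" using a(2) by (simp add: field_simps)
  have le: "real a \<le> real (card (Lam k))" using a(1) by simp
  have "z k \<le> 1"
  proof (rule ccontr)
    assume "\<not> z k \<le> 1"
    then have "1 * real (card (Lam k)) < z k * real (card (Lam k))" using cp by (intro mult_strict_right_mono) auto
    then show False using e le by simp
  qed
  moreover have "-1 \<le> z k"
  proof (rule ccontr)
    assume "\<not> -1 \<le> z k"
    then have "z k * real (card (Lam k)) < (-1) * real (card (Lam k))" using cp by (intro mult_strict_right_mono) auto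
    then show False using e le by simp
  qed
  ultimately show ?thesis by auto
qed


lemma sum_upd: assumes "finite A" "i \<in> A"
  shows "(\<Sum>j\<in>A. (f(i := v)) j) = (\<Sum>j\<in>A. f j) - f i + (v::real)"
proof -
  have "(\<Sum>j\<in>A. (f(i := v)) j) = v + (\<Sum>j\<in>A - {i}. (f(i := v)) j)"
    using sum.remove[OF assms, of "f(i := v)"] by simp
  also have "(\<Sum>j\<in>A - {i}. (f(i := v)) j) = (\<Sum>j\<in>A - {i}. f j)" by (rule sum.cong) auto
  also have "\<dots> = (\<Sum>j\<in>A. f j) - f i" using sum.remove[OF assms, of f] by simp
  finally show ?thesis by simp
qed

lemma G_flip: assumes "z \<in> G" "k < d" "s \<in> {-1, 1}" "1 - s * z k \<noteq> 0"
  shows "z(k := z k + s * 2 / real (card (Lam k))) \<in> G"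
proof -
  obtain \<sigma> where sp: "\<sigma> \<in> spins N" and z: "z = gamma d Lam \<sigma>" using assms unfolding Gamma_def by auto
  have cp: "real (card (Lam k)) > 0" using card_pos[OF assms(2)] by simp
  have zk: "z k = (\<Sum>i\<in>Lam k. \<sigma> i) / real (card (Lam k))" using z assms(2) unfolding gamma_def by simp
  have "\<exists>i\<in>Lam k. \<sigma> i \<noteq> s"
  proof (rule ccontr)
    assume "\<not> ?thesis"
    then have "(\<Sum>i\<in>Lam k. \<sigma> i) = real (card (Lam k)) * s" by simp
    then have "z k = s" using zk cp by simp
    then show False using assms(3,4) by auto
  qed
  then obtain i where i: "i \<in> Lam k" "\<sigma> i \<noteq> s" by blast
  have iN: "i \<in> {1..N}" using i Lam_sub[OF assms(2)] by auto
  have si: "\<sigma> i = - s" using i(2) sp iN assms(3) unfolding spins_def by auto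
  let ?\<tau> = "\<sigma>(i := s)"
  have tsp: "?\<tau> \<in> spins N" using sp iN assms(3) unfolding spins_def by auto
  have "gamma d Lam ?\<tau> = z(k := z k + s * 2 / real (card (Lam k)))"
  proof
    fix j
    show "gamma d Lam ?\<tau> j = (z(k := z k + s * 2 / real (card (Lam k)))) j"
    proof (cases "j < d")
      case False
      then show ?thesis using z assms(2) unfolding gamma_def by auto
    next
      case True
      show ?thesis
      proof (cases "j = k")
        case True
        have "(\<Sum>l\<in>Lam k. ?\<tau> l) = (\<Sum>l\<in>Lam k. \<sigma> l) + 2 * s"
          using sum_upd[OF Lam_fin[OF assms(2)] i(1)] si by simp
        then show ?thesis using True assms(2) zk cp unfolding gamma_def by (simp add: field_simps)
      next
        case False
        have "i \<notin> Lam j" using Lam_disj[OF \<open>j < d\<close> assms(2) False] i(1) by auto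
        then have "(\<Sum>l\<in>Lam j. ?\<tau> l) = (\<Sum>l\<in>Lam j. \<sigma> l)" by (intro sum.cong) auto
        then show ?thesis using False \<open>j < d\<close> z unfolding gamma_def by simp
      qed
    qed
  qed
  then show ?thesis using tsp unfolding Gamma_def by (metis image_eqI)
qed

lemma Sd_G: assumes "x \<in> Sd d" shows "x \<in> G"
proof -
  define \<sigma> where "\<sigma> = (\<lambda>i. if i \<in> {1..N} then x (THE k. k < d \<and> i \<in> Lam k) else 0)"
  have the: "\<And>i k. k < d \<Longrightarrow> i \<in> Lam k \<Longrightarrow> (THE k. k < d \<and> i \<in> Lam k) = k"
    using Lam_disj by (intro the_equality) auto
  have "\<sigma> \<in> spins N"
    unfolding spins_def
  proof (intro CollectI allI conjI impI)
    fix i assume "i \<in> {1..N}"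
    then obtain k where "k < d" "i \<in> Lam k" using Lam_Un by (metis UN_E lessThan_iff)
    then show "\<sigma> i \<in> {-1, 1}" using the \<open>i \<in> {1..N}\<close> assms unfolding \<sigma>_def Sd_def by auto
  next
    fix i assume "i \<notin> {1..N}" then show "\<sigma> i = 0" unfolding \<sigma>_def by (simp only: if_False)
  qed
  moreover have "gamma d Lam \<sigma> = x"
  proof
    fix k show "gamma d Lam \<sigma> k = x k"
    proof (cases "k < d")
      case True
      have "(\<Sum>i\<in>Lam k. \<sigma> i) = (\<Sum>i\<in>Lam k. x k)"
        using the[OF True] Lam_sub[OF True] unfolding \<sigma>_def by (intro sum.cong) auto
      then show ?thesis using True card_pos[OF True] unfolding gamma_def by simp
    next
      case False then show ?thesis using assms unfolding gamma_def Sd_def by simp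
    qed
  qed
  ultimately show ?thesis unfolding Gamma_def by (metis image_eqI)
qed



lemma rn_last: "x \<in> G \<Longrightarrow> z \<in> G \<Longrightarrow>
   rn N d Lam (Suc L) x z = (\<Sum>y\<in>G. rn N d Lam L x y * rN N d Lam y z)"
proof (induction L arbitrary: x)
  case 0
  have "(\<Sum>y\<in>G. (if x = y then 1 else 0) * rN N d Lam y z) = (\<Sum>y\<in>G. if x = y then rN N d Lam y z else 0)"
    by (intro sum.cong) auto
  also have "\<dots> = rN N d Lam x z" using G_fin 0 by simp
  finally have A: "(\<Sum>y\<in>G. (if x = y then 1 else 0) * rN N d Lam y z) = rN N d Lam x z" .
  have "(\<Sum>y\<in>G. rN N d Lam x y * (if y = z then 1 else 0)) = (\<Sum>y\<in>G. if y = z then rN N d Lam x y else 0)"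
    by (intro sum.cong) auto
  also have "\<dots> = rN N d Lam x z" using G_fin 0 by simp
  finally show ?case using A by simp
next
  case (Suc L)
  have "rn N d Lam (Suc (Suc L)) x z = (\<Sum>y\<in>G. rN N d Lam x y * (\<Sum>w\<in>G. rn N d Lam L y w * rN N d Lam w z))"
    using Suc.IH Suc.prems by (simp del: rn.simps(2) add: rn.simps(2)[of N d Lam "Suc L"])
  also have "\<dots> = (\<Sum>y\<in>G. \<Sum>w\<in>G. rN N d Lam x y * rn N d Lam L y w * rN N d Lam w z)"
    by (simp add: sum_distrib_left mult.assoc)
  also have "\<dots> = (\<Sum>w\<in>G. \<Sum>y\<in>G. rN N d Lam x y * rn N d Lam L y w * rN N d Lam w z)"
    by (rule sum.swap)
  also have "\<dots> = (\<Sum>w\<in>G. rn N d Lam (Suc L) x w * rN N d Lam w z)"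
    by (simp add: sum_distrib_right)
  finally show ?case .
qed

lemma upd_iff: "(z = y(k := y k + t)) \<longleftrightarrow> (y = z(k := z k - (t::real)))"
  by (auto simp: fun_eq_iff)

lemma expand: assumes "z \<in> G"
  shows "(\<Sum>y\<in>G. g y * rN N d Lam y z) = (\<Sum>k<d. \<Sum>s\<in>{-1, 1::real}.
     if z(k := z k - s * 2 / real (card (Lam k))) \<in> G
     then g (z(k := z k - s * 2 / real (card (Lam k)))) *
       (real (card (Lam k)) / real N * (1 - s * (z(k := z k - s * 2 / real (card (Lam k)))) k) / 2)
     else 0)"
proof -
  have "(\<Sum>y\<in>G. g y * rN N d Lam y z) = (\<Sum>y\<in>G. \<Sum>k<d. \<Sum>s\<in>{-1, 1::real}.
      if y = z(k := z k - s * 2 / real (card (Lam k)))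
      then g y * (real (card (Lam k)) / real N * (1 - s * y k) / 2) else 0)"
    unfolding rN_def sum_distrib_left
    by (intro sum.cong refl) (simp add: upd_iff)
  also have "\<dots> = (\<Sum>k<d. \<Sum>s\<in>{-1, 1::real}. \<Sum>y\<in>G.
      if y = z(k := z k - s * 2 / real (card (Lam k)))
      then g y * (real (card (Lam k)) / real N * (1 - s * y k) / 2) else 0)"
    by (subst sum.swap) (simp add: sum.swap[of _ G])
  also have "\<dots> = (\<Sum>k<d. \<Sum>s\<in>{-1, 1::real}.
     if z(k := z k - s * 2 / real (card (Lam k))) \<in> G
     then g (z(k := z k - s * 2 / real (card (Lam k)))) *
       (real (card (Lam k)) / real N * (1 - s * (z(k := z k - s * 2 / real (card (Lam k)))) k) / 2)
     else 0)"
    by (intro sum.cong refl) (rule sum.delta[OF G_fin])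
  finally show ?thesis .
qed

end

lemma prod_upd: assumes "finite A" "k \<in> A" "\<And>j. j \<in> A \<Longrightarrow> j \<noteq> k \<Longrightarrow> f j = g j"
  shows "prod f A * (g k::real) = prod g A * f k"
proof -
  have e: "prod f (A - {k}) = prod g (A - {k})" using assms(3) by (intro prod.cong) auto
  show ?thesis using prod.remove[OF assms(1,2), of f] prod.remove[OF assms(1,2), of g] e by simp
qed

lemma sum_upd2: assumes "finite A" "k \<in> A" "\<And>j. j \<in> A \<Longrightarrow> j \<noteq> k \<Longrightarrow> f j = g j"
  shows "sum f A + (g k::real) = sum g A + f k"
proof -
  have e: "sum f (A - {k}) = sum g (A - {k})" using assms(3) by (intro sum.cong) auto
  show ?thesis using sum.remove[OF assms(1,2), of f] sum.remove[OF assms(1,2), of g] e by simp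
qed

locale LPx = LP +
  fixes x :: "nat \<Rightarrow> real"
  assumes xS: "x \<in> Sd d"
begin

definition cr where "cr k = real (card (Lam k))"
definition Dl where "Dl z k = cr k * (1 - x k * z k) / 2"
definition dn where "dn z k = nat (round (Dl z k))"
definition mm where "mm z = (\<Sum>k<d. dn z k)"
definition B where "B z = (\<Prod>k<d. real (card (Lam k) choose dn z k))"
definition yT where "yT z k = z(k := z k + x k * 2 / cr k)"
definition yA where "yA z k = z(k := z k - x k * 2 / cr k)"

lemma x_pm: "k < d \<Longrightarrow> x k = 1 \<or> x k = -1" using xS unfolding Sd_def by auto
lemma xG: "x \<in> G" using Sd_G xS .
lemma cr_pos: "k < d \<Longrightarrow> cr k > 0" unfolding cr_def using card_pos by simp

lemma Dl_nat: assumes "z \<in> G" "k < d"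
  shows "real (dn z k) = Dl z k \<and> dn z k \<le> card (Lam k)"
proof -
  obtain a::nat where a: "a \<le> card (Lam k)" "real (card (Lam k)) * (1 + z k) / 2 = real a"
    using G_int[OF assms] by blast
  show ?thesis
  proof (cases "x k = 1")
    case True
    have "Dl z k = real (card (Lam k) - a)" using a True unfolding Dl_def cr_def
      by (simp add: of_nat_diff field_simps)
    then show ?thesis unfolding dn_def by simp
  next
    case False
    then have "x k = -1" using x_pm[OF assms(2)] by simp
    then have "Dl z k = real a" using a unfolding Dl_def cr_def by (simp add: field_simps)
    then show ?thesis unfolding dn_def using a by simp
  qed
qed

lemma Dl_nonneg: "z \<in> G \<Longrightarrow> k < d \<Longrightarrow> 0 \<le> Dl z k"
  using Dl_nat by (metis of_nat_0_le_iff)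

lemma Dl_le: "z \<in> G \<Longrightarrow> k < d \<Longrightarrow> Dl z k \<le> cr k"
  using Dl_nat unfolding cr_def by (metis of_nat_le_iff)

lemma Dl_ge1: "z \<in> G \<Longrightarrow> k < d \<Longrightarrow> Dl z k \<noteq> 0 \<Longrightarrow> 1 \<le> Dl z k"
  using Dl_nat by (metis less_one not_less of_nat_0 of_nat_1 of_nat_le_iff)

lemma mm_real: "z \<in> G \<Longrightarrow> real (mm z) = (\<Sum>k<d. Dl z k)"
  unfolding mm_def by (simp add: Dl_nat)

lemma sum_cr: "(\<Sum>k<d. cr k) = real N"
  unfolding cr_def using sum_card by (metis of_nat_sum)

lemma Dl_yT: "k < d \<Longrightarrow> Dl (yT z k) k = Dl z k - 1"
  using cr_pos[of k] x_pm[of k] unfolding Dl_def yT_def by (auto simp: field_simps)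
lemma Dl_yA: "k < d \<Longrightarrow> Dl (yA z k) k = Dl z k + 1"
  using cr_pos[of k] x_pm[of k] unfolding Dl_def yA_def by (auto simp: field_simps)
lemma Dl_yT_o: "j \<noteq> k \<Longrightarrow> Dl (yT z k) j = Dl z j" unfolding Dl_def yT_def by simp
lemma Dl_yA_o: "j \<noteq> k \<Longrightarrow> Dl (yA z k) j = Dl z j" unfolding Dl_def yA_def by simp
lemma dn_yT_o: "j \<noteq> k \<Longrightarrow> dn (yT z k) j = dn z j" unfolding dn_def by (simp add: Dl_yT_o)
lemma dn_yA_o: "j \<noteq> k \<Longrightarrow> dn (yA z k) j = dn z j" unfolding dn_def by (simp add: Dl_yA_o)

lemma mm_yT: assumes "z \<in> G" "yT z k \<in> G" "k < d" shows "mm (yT z k) + 1 = mm z"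
proof -
  have "real (mm (yT z k)) + Dl z k = real (mm z) + Dl (yT z k) k"
    unfolding mm_real[OF assms(1)] mm_real[OF assms(2)]
    by (rule sum_upd2) (use assms(3) Dl_yT_o in auto)
  then have "real (mm (yT z k)) + 1 = real (mm z)" using Dl_yT[OF assms(3)] by simp
  then show ?thesis by linarith
qed

lemma mm_yA: assumes "z \<in> G" "yA z k \<in> G" "k < d" shows "mm (yA z k) = mm z + 1"
proof -
  have "real (mm (yA z k)) + Dl z k = real (mm z) + Dl (yA z k) k"
    unfolding mm_real[OF assms(1)] mm_real[OF assms(2)]
    by (rule sum_upd2) (use assms(3) Dl_yA_o in auto)
  then have "real (mm (yA z k)) = real (mm z) + 1" using Dl_yA[OF assms(3)] by simp
  then show ?thesis by linarith
qed

lemma B_yT: assumes "z \<in> G" "yT z k \<in> G" "k < d"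
  shows "B (yT z k) * (cr k - Dl z k + 1) = B z * Dl z k"
proof -
  let ?c = "card (Lam k)"
  define n' where "n' = dn (yT z k) k"
  have n'1: "real n' = Dl z k - 1" "n' \<le> ?c" using Dl_nat[OF assms(2,3)] Dl_yT[OF assms(3)] n'_def by auto
  have n: "dn z k = n' + 1" using Dl_nat[OF assms(1,3)] n'1 by (metis add_diff_cancel_right' diff_add_cancel of_nat_1 of_nat_add of_nat_eq_iff)
  have bs: "real (?c choose n') * real (?c - n') = real (?c choose (n'+1)) * real (n'+1)"
    using binom_step[of ?c n'] by (metis of_nat_mult)
  have P: "B (yT z k) * real (?c choose dn z k) = B z * real (?c choose n')"
    unfolding B_def n'_def by (rule prod_upd) (use assms(3) dn_yT_o in auto)
  have cz: "cr k - Dl z k + 1 = real (?c - n')" using n'1 unfolding cr_def by (simp add: of_nat_diff)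
  have dz: "Dl z k = real (n' + 1)" using n'1 by simp
  have pos: "real (?c choose (n'+1)) > 0" using Dl_nat[OF assms(1,3)] n by simp
  have "B (yT z k) * real (?c choose (n'+1)) * (cr k - Dl z k + 1) = B (yT z k) * real (?c choose (n'+1)) * real (?c - n')"
    by (simp only: cz)
  also have "\<dots> = B z * (real (?c choose n') * real (?c - n'))" using P n by (simp add: algebra_simps)
  also have "\<dots> = B z * Dl z k * real (?c choose (n'+1))" using bs dz by (simp add: algebra_simps)
  finally have "B (yT z k) * real (?c choose (n'+1)) * (cr k - Dl z k + 1) = B z * Dl z k * real (?c choose (n'+1))" .
  then have "(B (yT z k) * (cr k - Dl z k + 1)) * real (?c choose (n'+1)) = (B z * Dl z k) * real (?c choose (n'+1))"
    by (simp only: mult_ac)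
  then show ?thesis using pos by (simp only: mult_cancel_right) simp
qed

lemma B_yA: assumes "z \<in> G" "yA z k \<in> G" "k < d"
  shows "B (yA z k) * (Dl z k + 1) = B z * (cr k - Dl z k)"
proof -
  let ?c = "card (Lam k)"
  define n where "n = dn z k"
  have n1: "real n = Dl z k" "n \<le> ?c" using Dl_nat[OF assms(1,3)] n_def by auto
  have n': "dn (yA z k) k = n + 1" using Dl_nat[OF assms(2,3)] n1 Dl_yA[OF assms(3)]
    by (metis of_nat_1 of_nat_add of_nat_eq_iff)
  have bs: "real (?c choose n) * real (?c - n) = real (?c choose (n+1)) * real (n+1)"
    using binom_step[of ?c n] by (metis of_nat_mult)
  have P: "B (yA z k) * real (?c choose n) = B z * real (?c choose (n+1))"
    using prod_upd[of "{..<d}" k "\<lambda>j. real (card (Lam j) choose dn (yA z k) j)" "\<lambda>j. real (card (Lam j) choose dn z j)"]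
      assms(3) dn_yA_o n' unfolding B_def n_def by simp
  have cz: "cr k - Dl z k = real (?c - n)" using n1 unfolding cr_def by (simp add: of_nat_diff)
  have dz: "Dl z k + 1 = real (n + 1)" using n1 by simp
  have pos: "real (?c choose n) > 0" using n1 by simp
  have "B (yA z k) * real (?c choose n) * (Dl z k + 1) = B (yA z k) * real (?c choose n) * real (n + 1)"
    by (simp only: dz)
  also have "\<dots> = B z * (real (?c choose (n+1)) * real (n+1))" using P by (simp add: algebra_simps)
  also have "\<dots> = B z * (cr k - Dl z k) * real (?c choose n)" using bs cz by (simp add: algebra_simps)
  finally have "B (yA z k) * real (?c choose n) * (Dl z k + 1) = B z * (cr k - Dl z k) * real (?c choose n)" .
  then have "(B (yA z k) * (Dl z k + 1)) * real (?c choose n) = (B z * (cr k - Dl z k)) * real (?c choose n)"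
    by (simp only: mult_ac)
  then show ?thesis using pos by (simp only: mult_cancel_right) simp
qed


lemma rec: assumes "z \<in> G"
  shows "rn N d Lam (Suc L) x z = (\<Sum>k<d.
    (if yT z k \<in> G then rn N d Lam L x (yT z k) * ((cr k - Dl z k + 1) / real N) else 0) +
    (if yA z k \<in> G then rn N d Lam L x (yA z k) * ((Dl z k + 1) / real N) else 0))" (is "_ = ?rhs")
proof -
  have "rn N d Lam (Suc L) x z = (\<Sum>y\<in>G. rn N d Lam L x y * rN N d Lam y z)"
    using rn_last[OF xG assms] .
  also have "\<dots> = (\<Sum>k<d. \<Sum>s\<in>{-1, 1::real}.
     if z(k := z k - s * 2 / real (card (Lam k))) \<in> G
     then rn N d Lam L x (z(k := z k - s * 2 / real (card (Lam k)))) *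
       (real (card (Lam k)) / real N * (1 - s * (z(k := z k - s * 2 / real (card (Lam k)))) k) / 2)
     else 0)" by (rule expand[OF assms])
  also have "\<dots> = ?rhs"
  proof (rule sum.cong[OF refl])
    fix k assume "k \<in> {..<d}"
    then have k: "k < d" by simp
    have c0: "real (card (Lam k)) \<noteq> 0" using card_pos[OF k] by simp
    have eT: "\<And>s. s = - x k \<Longrightarrow> z(k := z k - s * 2 / real (card (Lam k))) = yT z k"
      unfolding yT_def cr_def by simp
    have eA: "\<And>s. s = x k \<Longrightarrow> z(k := z k - s * 2 / real (card (Lam k))) = yA z k"
      unfolding yA_def cr_def by simp
    have wT: "\<And>s. s = - x k \<Longrightarrow> real (card (Lam k)) / real N * (1 - s * (z(k := z k - s * 2 / real (card (Lam k)))) k) / 2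
       = (cr k - Dl z k + 1) / real N"
      using x_pm[OF k] c0 Npos unfolding Dl_def cr_def by (auto simp: field_simps)
    have wA: "\<And>s. s = x k \<Longrightarrow> real (card (Lam k)) / real N * (1 - s * (z(k := z k - s * 2 / real (card (Lam k)))) k) / 2
       = (Dl z k + 1) / real N"
      using x_pm[OF k] c0 Npos unfolding Dl_def cr_def by (auto simp: field_simps)
    let ?F = "\<lambda>s. if z(k := z k - s * 2 / real (card (Lam k))) \<in> G
     then rn N d Lam L x (z(k := z k - s * 2 / real (card (Lam k)))) *
       (real (card (Lam k)) / real N * (1 - s * (z(k := z k - s * 2 / real (card (Lam k)))) k) / 2)
     else 0"
    have "(\<Sum>s\<in>{-1, 1::real}. ?F s) = ?F (- x k) + ?F (x k)"
      using x_pm[OF k] by auto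
    also have "\<dots> = (if yT z k \<in> G then rn N d Lam L x (yT z k) * ((cr k - Dl z k + 1) / real N) else 0) +
    (if yA z k \<in> G then rn N d Lam L x (yA z k) * ((Dl z k + 1) / real N) else 0)"
      by (simp only: wT[OF refl] wA[OF refl], simp only: eT[OF refl] eA[OF refl])
    finally show "(\<Sum>s\<in>{-1, 1::real}. ?F s) = (if yT z k \<in> G then rn N d Lam L x (yT z k) * ((cr k - Dl z k + 1) / real N) else 0) +
    (if yA z k \<in> G then rn N d Lam L x (yA z k) * ((Dl z k + 1) / real N) else 0)" .
  qed
  finally show ?thesis .
qed


lemma Dl_x: "k < d \<Longrightarrow> Dl x k = 0"
  using x_pm[of k] unfolding Dl_def by auto

lemma mm_x: "mm x = 0" unfolding mm_def dn_def by (simp add: Dl_x)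
lemma B_x: "B x = 1" unfolding B_def dn_def by (simp add: Dl_x)

lemma mm0: assumes "z \<in> G" "mm z = 0" shows "z = x"
proof
  fix k show "z k = x k"
  proof (cases "k < d")
    case True
    have "dn z k = 0" using assms(2) True unfolding mm_def by simp
    then have "Dl z k = 0" using Dl_nat[OF assms(1) True] by simp
    then have "x k * z k = 1" using cr_pos[OF True] unfolding Dl_def by simp
    then show ?thesis using x_pm[OF True] by auto
  next
    case False
    then show ?thesis using G_high[OF assms(1)] xS unfolding Sd_def by simp
  qed
qed

lemma B_nonneg: "0 \<le> B z" unfolding B_def by (intro prod_nonneg) simp

lemma yT_G: assumes "z \<in> G" "k < d" "Dl z k \<noteq> 0" shows "yT z k \<in> G"
proof -
  have "1 - x k * z k \<noteq> 0" using assms(3) unfolding Dl_def by auto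
  then show ?thesis using G_flip[OF assms(1,2), of "x k"] x_pm[OF assms(2)] unfolding yT_def cr_def by auto
qed

lemma supp: "z \<in> G \<Longrightarrow> rn N d Lam L x z \<noteq> 0 \<Longrightarrow> \<exists>p. L = mm z + 2 * p"
proof (induction L arbitrary: z)
  case 0
  then have "z = x" by (simp split: if_splits)
  then show ?case using mm_x by simp
next
  case (Suc L)
  have "(\<Sum>k<d.
    (if yT z k \<in> G then rn N d Lam L x (yT z k) * ((cr k - Dl z k + 1) / real N) else 0) +
    (if yA z k \<in> G then rn N d Lam L x (yA z k) * ((Dl z k + 1) / real N) else 0)) \<noteq> 0"
    using Suc.prems rec[OF Suc.prems(1)] by simp
  then obtain k where k: "k < d" and
    ne: "(if yT z k \<in> G then rn N d Lam L x (yT z k) * ((cr k - Dl z k + 1) / real N) else 0) +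
    (if yA z k \<in> G then rn N d Lam L x (yA z k) * ((Dl z k + 1) / real N) else 0) \<noteq> 0"
    by (meson lessThan_iff sum.neutral)
  show ?case
  proof (cases "yT z k \<in> G \<and> rn N d Lam L x (yT z k) \<noteq> 0")
    case True
    then obtain p where "L = mm (yT z k) + 2 * p" using Suc.IH by blast
    then show ?thesis using mm_yT[OF Suc.prems(1) _ k] True by (intro exI[of _ p]) auto
  next
    case False
    then have "yA z k \<in> G \<and> rn N d Lam L x (yA z k) \<noteq> 0" using ne by (auto split: if_splits)
    then obtain p where "L = mm (yA z k) + 2 * p" using Suc.IH by blast
    then show ?thesis using mm_yA[OF Suc.prems(1) _ k] \<open>yA z k \<in> G \<and> _\<close> by (intro exI[of _ "Suc p"]) auto
  qed
qed

lemma exact: "z \<in> G \<Longrightarrow> mm z = L \<Longrightarrow> rn N d Lam L x z = fact L / real N ^ L * B z"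
proof (induction L arbitrary: z)
  case 0
  then have "z = x" using mm0 by simp
  then show ?case using B_x by simp
next
  case (Suc L)
  define K where "K = fact L / real N ^ Suc L * B z"
  have T: "(if yT z k \<in> G then rn N d Lam L x (yT z k) * ((cr k - Dl z k + 1) / real N) else 0) = Dl z k * K"
    if k: "k < d" for k
  proof (cases "yT z k \<in> G")
    case True
    have "mm (yT z k) = L" using mm_yT[OF Suc.prems(1) True k] Suc.prems(2) by simp
    then have "rn N d Lam L x (yT z k) = fact L / real N ^ L * B (yT z k)" using Suc.IH True by blast
    then have "rn N d Lam L x (yT z k) * ((cr k - Dl z k + 1) / real N)
       = fact L / real N ^ L / real N * (B (yT z k) * (cr k - Dl z k + 1))" by simp
    also have "\<dots> = Dl z k * K" unfolding B_yT[OF Suc.prems(1) True k] K_def by (simp add: field_simps)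
    finally show ?thesis using True by simp
  next
    case False
    then have "Dl z k = 0" using yT_G[OF Suc.prems(1) k] by blast
    then show ?thesis using False by simp
  qed
  have A: "(if yA z k \<in> G then rn N d Lam L x (yA z k) * ((Dl z k + 1) / real N) else 0) = 0"
    if k: "k < d" for k
  proof (cases "yA z k \<in> G \<and> rn N d Lam L x (yA z k) \<noteq> 0")
    case True
    then obtain p where "L = mm (yA z k) + 2 * p" using supp by blast
    then show ?thesis using mm_yA[OF Suc.prems(1) _ k] True Suc.prems(2) by auto
  qed auto
  have "rn N d Lam (Suc L) x z = (\<Sum>k<d. Dl z k * K)"
    unfolding rec[OF Suc.prems(1)] by (intro sum.cong refl) (simp add: T A)
  also have "\<dots> = real (mm z) * K" unfolding mm_real[OF Suc.prems(1)] by (simp add: sum_distrib_right)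
  also have "\<dots> = fact (Suc L) / real N ^ Suc L * B z" unfolding K_def Suc.prems(2)
    by (simp add: field_simps)
  finally show ?case .
qed


lemma bound: "z \<in> G \<Longrightarrow> L = mm z + 2 * p \<Longrightarrow>
  rn N d Lam L x z \<le> B z * fact L / (fact p * real N ^ (mm z + p))"
proof (induction L arbitrary: z p)
  case 0
  then have "z = x" "p = 0" using mm0 by auto
  then show ?case using B_x mm_x by simp
next
  case (Suc L)
  define M where "M = mm z"
  define K where "K = B z * fact L / (fact p * real N ^ (M + p))"
  have K0: "0 \<le> K" unfolding K_def using B_nonneg by simp
  have NP: "real N > 0" using Npos by simp
  have T: "(if yT z k \<in> G then rn N d Lam L x (yT z k) * ((cr k - Dl z k + 1) / real N) else 0) \<le> Dl z k * K"
    if k: "k < d" for k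
  proof (cases "yT z k \<in> G")
    case True
    have mT: "mm (yT z k) + 1 = M" using mm_yT[OF Suc.prems(1) True k] M_def by simp
    then have "L = mm (yT z k) + 2 * p" using Suc.prems(2) M_def by simp
    then have ih: "rn N d Lam L x (yT z k) \<le> B (yT z k) * fact L / (fact p * real N ^ (mm (yT z k) + p))"
      using Suc.IH True by blast
    have w0: "0 \<le> (cr k - Dl z k + 1) / real N" using Dl_le[OF Suc.prems(1) k] by simp
    have "rn N d Lam L x (yT z k) * ((cr k - Dl z k + 1) / real N)
       \<le> B (yT z k) * fact L / (fact p * real N ^ (mm (yT z k) + p)) * ((cr k - Dl z k + 1) / real N)"
      by (rule mult_right_mono[OF ih w0])
    also have "\<dots> = (B (yT z k) * (cr k - Dl z k + 1)) * fact L / (fact p * (real N ^ (mm (yT z k) + p) * real N))"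
      by (simp add: field_simps)
    also have "real N ^ (mm (yT z k) + p) * real N = real N ^ (M + p)"
    proof -
      have "M + p = Suc (mm (yT z k) + p)" using mT by simp
      then show ?thesis by (simp only: power_Suc mult.commute)
    qed
    also have "(B (yT z k) * (cr k - Dl z k + 1)) * fact L / (fact p * real N ^ (M + p)) = Dl z k * K"
      unfolding B_yT[OF Suc.prems(1) True k] K_def by simp
    finally show ?thesis using True by simp
  next
    case False
    then show ?thesis using Dl_nonneg[OF Suc.prems(1) k] K0 by simp
  qed
  have A: "(if yA z k \<in> G then rn N d Lam L x (yA z k) * ((Dl z k + 1) / real N) else 0)
     \<le> (cr k - Dl z k) * (real p / real N) * K"
    if k: "k < d" for k
  proof (cases "yA z k \<in> G")
    case True
    have mA: "mm (yA z k) = M + 1" using mm_yA[OF Suc.prems(1) True k] M_def by simp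
    have c0: "0 \<le> cr k - Dl z k" using Dl_le[OF Suc.prems(1) k] by simp
    show ?thesis
    proof (cases p)
      case 0
      have "rn N d Lam L x (yA z k) = 0"
      proof (rule ccontr)
        assume "rn N d Lam L x (yA z k) \<noteq> 0"
        then obtain q where "L = mm (yA z k) + 2 * q" using supp True by blast
        then show False using mA Suc.prems(2) 0 M_def by simp
      qed
      then show ?thesis using 0 by simp
    next
      case (Suc q)
      have "L = mm (yA z k) + 2 * q" using mA Suc.prems(2) Suc M_def by simp
      then have ih: "rn N d Lam L x (yA z k) \<le> B (yA z k) * fact L / (fact q * real N ^ (mm (yA z k) + q))"
        using Suc.IH True by blast
      have w0: "0 \<le> (Dl z k + 1) / real N" using Dl_nonneg[OF Suc.prems(1) k] by simp
      have "rn N d Lam L x (yA z k) * ((Dl z k + 1) / real N)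
         \<le> B (yA z k) * fact L / (fact q * real N ^ (mm (yA z k) + q)) * ((Dl z k + 1) / real N)"
        by (rule mult_right_mono[OF ih w0])
      also have "\<dots> = (B (yA z k) * (Dl z k + 1)) * fact L / (fact q * real N ^ (M + p) * real N)"
        using mA Suc by (simp add: field_simps)
      also have "\<dots> = (cr k - Dl z k) * (real p / real N) * K"
      proof -
        have fp: "(fact p :: real) = real p * fact q" using Suc by simp
        have aux: "\<And>(b::real) c f qq pp n pr. pr > 0 \<Longrightarrow> qq > 0 \<Longrightarrow> pp > 0 \<Longrightarrow> n > 0 \<Longrightarrow>
           b * c * f / (qq * pp * n) = c * (pr / n) * (b * f / ((pr * qq) * pp))"
          by (simp add: field_simps)
        show ?thesis unfolding B_yA[OF Suc.prems(1) True k] K_def fp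
          by (rule aux) (use Suc NP in auto)
      qed
      finally show ?thesis using True by simp
    qed
  next
    case False
    then show ?thesis using Dl_le[OF Suc.prems(1) k] K0 by simp
  qed
  have "rn N d Lam (Suc L) x z \<le> (\<Sum>k<d. Dl z k * K + (cr k - Dl z k) * (real p / real N) * K)"
    unfolding rec[OF Suc.prems(1)] by (intro sum_mono add_mono T A) auto
  also have "\<dots> = K * (real M + (real N - real M) * (real p / real N))"
  proof -
    have "(\<Sum>k<d. Dl z k) * K + ((\<Sum>k<d. cr k) - (\<Sum>k<d. Dl z k)) * (real p / real N) * K
       = (\<Sum>k<d. Dl z k * K + (cr k - Dl z k) * (real p / real N) * K)"
      by (simp only: sum_subtractf[symmetric] sum_distrib_right sum.distrib)
    then show ?thesis using mm_real[OF Suc.prems(1)] sum_cr unfolding M_def by (simp add: algebra_simps)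
  qed
  also have "\<dots> \<le> K * real (Suc L)"
  proof (rule mult_left_mono[OF _ K0])
    have "(\<Sum>k<d. Dl z k) \<le> (\<Sum>k<d. cr k)" by (rule sum_mono) (simp add: Dl_le[OF Suc.prems(1)])
    then have "real M \<le> real N" using mm_real[OF Suc.prems(1)] sum_cr unfolding M_def by simp
    then have "(real N - real M) * (real p / real N) \<le> real N * (real p / real N)"
      using Dl_nonneg[OF Suc.prems(1)] mm_real[OF Suc.prems(1)] unfolding M_def
      by (intro mult_right_mono) auto
    also have "\<dots> = real p" using NP by simp
    finally show "real M + (real N - real M) * (real p / real N) \<le> real (Suc L)"
      using Suc.prems(2) M_def by simp
  qed
  also have "\<dots> = B z * fact (Suc L) / (fact p * real N ^ (mm z + p))"
    unfolding K_def M_def by (simp add: field_simps)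
  finally show ?case .
qed


lemma QN_B: assumes "z \<in> G" shows "QN N d Lam z = B z / 2 ^ N"
proof -
  have "(\<Prod>k<d. real (card (Lam k) choose nat (round (real (card (Lam k)) * (1 + z k) / 2))))
      = B z" unfolding B_def
  proof (rule prod.cong[OF refl])
    fix k assume "k \<in> {..<d}" then have k: "k < d" by simp
    obtain a::nat where a: "a \<le> card (Lam k)" "real (card (Lam k)) * (1 + z k) / 2 = real a"
      using G_int[OF assms k] by blast
    have r: "nat (round (real (card (Lam k)) * (1 + z k) / 2)) = a" using a(2) by simp
    have "card (Lam k) choose a = card (Lam k) choose dn z k"
    proof (cases "x k = 1")
      case True
      have "Dl z k = real (card (Lam k) - a)" using a True unfolding Dl_def cr_def
        by (simp add: of_nat_diff field_simps)
      then have "dn z k = card (Lam k) - a" unfolding dn_def by simp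
      then show ?thesis using binomial_symmetric[OF a(1)] by simp
    next
      case False
      then have "x k = -1" using x_pm[OF k] by simp
      then have "Dl z k = real a" using a unfolding Dl_def cr_def by (simp add: field_simps)
      then show ?thesis unfolding dn_def by simp
    qed
    then show "real (card (Lam k) choose nat (round (real (card (Lam k)) * (1 + z k) / 2)))
      = real (card (Lam k) choose dn z k)" using r by simp
  qed
  then show ?thesis unfolding QN_def by simp
qed

lemma dist_mm: assumes "z \<in> G" shows "distL d Lam x z = real (mm z)"
proof -
  have "distL d Lam x z = (\<Sum>k<d. Dl z k)" unfolding distL_def
  proof (rule sum.cong[OF refl])
    fix k assume "k \<in> {..<d}" then have k: "k < d" by simp
    have "\<bar>z k\<bar> \<le> 1" using G_abs[OF assms k] .
    then have "\<bar>x k - z k\<bar> = 1 - x k * z k" using x_pm[OF k] by auto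
    then show "real (card (Lam k)) / 2 * \<bar>x k - z k\<bar> = Dl z k" unfolding Dl_def cr_def by simp
  qed
  then show ?thesis using mm_real[OF assms] by simp
qed

lemma ratio: "z \<in> G \<Longrightarrow> QN N d Lam z / QN N d Lam x = B z"
  using QN_B[of z] QN_B[OF xG] B_x by simp

end

theorem lemma3p13:
  fixes N d :: nat and Lam :: "nat \<Rightarrow> nat set"
  assumes part: "is_partition N d Lam"
  shows "(\<forall>n x z. 0 < n \<and> n \<le> N \<and> x \<in> Sd d \<and> z \<in> Gamma N d Lam \<and> distL d Lam x z = real n
            \<longrightarrow> rn N d Lam n x z = fact n / real N ^ n * (QN N d Lam z / QN N d Lam x))
       \<and> (\<forall>n m p x z. 1 \<le> m \<and> n + 2 = m + 2 * p \<and> x \<in> Sd d \<and> z \<in> Gamma N d Lam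
            \<and> distL d Lam x z = real m
            \<longrightarrow> rn N d Lam (n + 2) x z
                \<le> rn N d Lam m x z * (1 / real N ^ p) * (fact (m + 2 * p) / (fact m * fact p)))"
proof (cases "d = 0")
  case True
  then have "distL d Lam x z = 0" for x z unfolding distL_def by simp
  then show ?thesis by auto
next
  case False
  then have dp: "0 < d" by simp
  show ?thesis
  proof (intro conjI allI impI)
    fix n x z assume h: "0 < n \<and> n \<le> N \<and> x \<in> Sd d \<and> z \<in> Gamma N d Lam \<and> distL d Lam x z = real n"
    interpret LPx N d Lam x using part dp h by unfold_locales auto
    have "mm z = n" using dist_mm[of z] h by simp
    then show "rn N d Lam n x z = fact n / real N ^ n * (QN N d Lam z / QN N d Lam x)"
      using exact[of z n] ratio[of z] h by simp
  next
    fix n m p x z assume h: "1 \<le> m \<and> n + 2 = m + 2 * p \<and> x \<in> Sd d \<and> z \<in> Gamma N d Lam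
            \<and> distL d Lam x z = real m"
    interpret LPx N d Lam x using part dp h by unfold_locales auto
    have mz: "mm z = m" using dist_mm[of z] h by simp
    have b: "rn N d Lam (m + 2 * p) x z \<le> B z * fact (m + 2 * p) / (fact p * real N ^ (m + p))"
      using bound[of z "m + 2 * p" p] h mz by (simp del: rn.simps)
    have nn: "n + 2 = m + 2 * p" using h by simp
    have e: "rn N d Lam m x z = fact m / real N ^ m * B z" using exact[of z m] h mz by simp
    have "B z * fact (m + 2 * p) / (fact p * real N ^ (m + p))
        = rn N d Lam m x z * (1 / real N ^ p) * (fact (m + 2 * p) / (fact m * fact p))"
      unfolding e using h Npos by (simp add: field_simps power_add)
    then show "rn N d Lam (n + 2) x z
                \<le> rn N d Lam m x z * (1 / real N ^ p) * (fact (m + 2 * p) / (fact m * fact p))"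
      using b unfolding nn by simp
  qed
qed

end
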